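(* Let $q\in(0,1/2)$ and $\gamma\in[0,1]$. If $q''>q$ (intermittent selfish mining is more profitable than honest mining), then $q''<q'$ (selfish mining is more profitable than intermittent selfish mining).
   Context: Here $p=1-q$, and $$\delta=\frac{(1+pq)(p-q)+pq}{p^2q+p-q},\qquad q'=\frac{((1+pq)(p-q)+pq)q-(1-\gamma)p^2q(p-q)}{p^2q+p-q},\qquad q''=\frac{q+q'}{\delta+1/\delta}.$$ These are respectively the mean difficulty parameter, the apparent hashrate of selfish mining, and the apparent hashrate of intermittent selfish mining. A strategy is more profitable than another when its apparent hashrate (long-run revenue ratio divided by $b/\tau_0$) is larger. Honest mining has apparent hashrate $q$. *)

theory Defs
  imports Complex_Main
begin

text \<open>Here p = 1 - q. Mean difficulty parameter delta, apparent hashrate of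
selfish mining q' (sm_rate) and of intermittent selfish mining q'' (ism_rate).\<close>

definition delta :: "real \<Rightarrow> real" where
  "delta q = (let p = 1 - q in
     ((1 + p*q)*(p - q) + p*q) / (p^2*q + p - q))"

definition sm_rate :: "real \<Rightarrow> real \<Rightarrow> real" where
  "sm_rate q \<gamma> = (let p = 1 - q in
     (((1 + p*q)*(p - q) + p*q)*q - (1 - \<gamma>)*p^2*q*(p - q)) / (p^2*q + p - q))"

definition ism_rate :: "real \<Rightarrow> real \<Rightarrow> real" where
  "ism_rate q \<gamma> = (q + sm_rate q \<gamma>) / (delta q + 1 / delta q)"

end

theory Submission
  imports Defs
begin

theorem mainTheorem9:
  fixes q \<gamma> :: real
  assumes "0 < q" and "q < 1/2" and "0 \<le> \<gamma>" and "\<gamma> \<le> 1"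
    and "ism_rate q \<gamma> > q"
  shows "ism_rate q \<gamma> < sm_rate q \<gamma>"
proof -
  define p where "p = 1 - q"
  have pq: "p > q" "q > 0" "p > 0" using assms p_def by auto
  have den: "p^2*q + p - q > 0" using pq by (smt (verit) mult_pos_pos zero_less_power)
  have num: "(1 + p*q)*(p - q) + p*q > 0" using pq
    by (simp add: add_pos_pos mult_pos_pos)
  have dpos: "delta q > 0" unfolding delta_def Let_def p_def[symmetric]
    using den num by simp
  define d where "d = delta q"
  have D2: "d + 1/d \<ge> 2"
  proof -
    have "(d - 1)^2 \<ge> 0" by simp
    hence "d*d + 1 \<ge> 2*d" by (simp add: power2_eq_square algebra_simps)
    thus ?thesis using dpos d_def by (simp add: field_simps)
  qed
  define s where "s = q + sm_rate q \<gamma>"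
  have I: "ism_rate q \<gamma> = s / (d + 1/d)" unfolding ism_rate_def s_def d_def by simp
  have spos: "s > 0"
  proof (rule ccontr)
    assume "\<not> s > 0"
    hence "s / (d+1/d) \<le> 0" using D2 by (simp add: divide_nonpos_pos)
    thus False using I assms(5) pq by linarith
  qed
  have "s / (d + 1/d) \<le> s / 2" using D2 spos by (intro divide_left_mono) auto
  hence le: "ism_rate q \<gamma> \<le> s/2" using I by simp
  hence "q < s/2" using assms(5) by linarith
  hence "sm_rate q \<gamma> > q" unfolding s_def by simp
  thus ?thesis using le s_def by simp
qed

end
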